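(* The skew characteristic polynomial is a $4$-invariant of simple graphs: for every simple graph $G$ and every pair of distinct vertices $a,b$ of $G$, $$Q_G(u)-Q_{G'_{ab}}(u)=Q_{\widetilde G_{ab}}(u)-Q_{\widetilde G'_{ab}}(u).$$
   Context: For a simple graph $G$, $A(G)$ denotes its adjacency matrix over $\mathbb{F}_2$ (entry $1$ iff the vertices are adjacent, zero diagonal), and the nondegeneracy $\nu(G)\in\{0,1\}$ equals $1$ iff $\det A(G)=1$ over $\mathbb{F}_2$ (with $\nu$ of the empty graph equal to $1$, the determinant of the empty matrix being $1$). The skew characteristic polynomial is $Q_G(u)=\sum_{U\subset V(G)}\nu(G|_U)\,u^{|V(G)|-|U|}$, where $G|_U$ is the subgraph induced on $U$. For vertices $a,b$: $G'_{ab}$ is obtained from $G$ by switching adjacency between $a$ and $b$; $\widetilde G_{ab}$ is obtained by switching the adjacency between $a$ and each vertex $v\ne a$ adjacent to $b$; $\widetilde G'_{ab}$ is the composition of these two operations. *)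

theory Defs
  imports "HOL-Library.Z2" "HOL-Combinatorics.Permutations"
    "HOL-Computational_Algebra.Polynomial"
begin

text \<open>A simple graph: a finite vertex set V with a symmetric, irreflexive
  adjacency relation E (only its values on V matter).\<close>
definition simple_graph :: "'a set \<Rightarrow> ('a \<Rightarrow> 'a \<Rightarrow> bool) \<Rightarrow> bool" where
  "simple_graph V E \<longleftrightarrow> finite V \<and> (\<forall>x\<in>V. \<forall>y\<in>V. E x y = E y x) \<and> (\<forall>x\<in>V. \<not> E x x)"

text \<open>Determinant over F_2 (type bit) of the adjacency matrix of the induced
  subgraph on U, by the Leibniz formula (signs are irrelevant in characteristic 2).
  For U empty this is 1.\<close>
definition det_F2 :: "('a \<Rightarrow> 'a \<Rightarrow> bool) \<Rightarrow> 'a set \<Rightarrow> bit" where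
  "det_F2 E U = (\<Sum>\<sigma> | \<sigma> permutes U. \<Prod>v\<in>U. (if E v (\<sigma> v) then 1 else 0))"

definition nondeg :: "('a \<Rightarrow> 'a \<Rightarrow> bool) \<Rightarrow> 'a set \<Rightarrow> nat" where
  "nondeg E U = (if det_F2 E U = 1 then 1 else 0)"

definition skew_char_poly :: "'a set \<Rightarrow> ('a \<Rightarrow> 'a \<Rightarrow> bool) \<Rightarrow> int poly" where
  "skew_char_poly V E = (\<Sum>U\<in>Pow V. monom (int (nondeg E U)) (card V - card U))"

definition switch_edge :: "'a \<Rightarrow> 'a \<Rightarrow> ('a \<Rightarrow> 'a \<Rightarrow> bool) \<Rightarrow> ('a \<Rightarrow> 'a \<Rightarrow> bool)" where
  "switch_edge a b E = (\<lambda>x y. if (x = a \<and> y = b) \<or> (x = b \<and> y = a) then \<not> E x y else E x y)"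

definition switch_nbhd :: "'a \<Rightarrow> 'a \<Rightarrow> ('a \<Rightarrow> 'a \<Rightarrow> bool) \<Rightarrow> ('a \<Rightarrow> 'a \<Rightarrow> bool)" where
  "switch_nbhd a b E = (\<lambda>x y. if (x = a \<and> y \<noteq> a \<and> E b y) \<or> (y = a \<and> x \<noteq> a \<and> E b x)
                                then \<not> E x y else E x y)"

end

theory Submission
  imports Defs
begin

definition DD :: "('a \<Rightarrow> 'a \<Rightarrow> bit) \<Rightarrow> 'a set \<Rightarrow> bit" where
  "DD M U = (\<Sum>\<sigma> | \<sigma> permutes U. \<Prod>v\<in>U. M v (\<sigma> v))"

lemma det_F2_DD: "det_F2 E U = DD (\<lambda>x y. if E x y then 1 else 0) U"
  unfolding det_F2_def DD_def by simp

lemma DD_cong: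
  assumes "\<And>v w. v \<in> U \<Longrightarrow> w \<in> U \<Longrightarrow> M v w = N v w"
  shows "DD M U = DD N U"
  unfolding DD_def
proof (rule sum.cong[OF refl], rule prod.cong[OF refl])
  fix \<sigma> v assume "\<sigma> \<in> {\<sigma>. \<sigma> permutes U}" "v \<in> U"
  then show "M v (\<sigma> v) = N v (\<sigma> v)" using assms permutes_in_image by fastforce
qed

lemma sum_invol_bit:
  assumes "finite S" "\<forall>x\<in>S. g x \<in> S \<and> g (g x) = x \<and> g x \<noteq> x \<and> f (g x) = f x"
  shows "sum f S = (0::bit)"
  using assms
proof (induction "card S" arbitrary: S rule: less_induct)
  case less
  show ?case
  proof (cases "S = {}")
    case True then show ?thesis by simp
  next
    case False
    then obtain x where x: "x \<in> S" by blast
    let ?S' = "S - {x, g x}"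
    have P: "\<And>z. z \<in> S \<Longrightarrow> g z \<in> S \<and> g (g z) = z \<and> g z \<noteq> z \<and> f (g z) = f z"
      using less.prems(2) by blast
    have hx: "g x \<in> S" "g (g x) = x" "g x \<noteq> x" "f (g x) = f x" using P[OF x] by blast+
    have sub: "{x, g x} \<subseteq> S" using x hx(1) by blast
    have "sum f S = sum f ?S' + sum f {x, g x}"
      by (rule sum.subset_diff[OF sub less.prems(1)])
    also have "sum f {x, g x} = f x + f (g x)" using hx(3) by (simp add: sum.insert_if)
    also have "\<dots> = 0" unfolding hx(4) by simp
    also have "sum f ?S' = 0"
    proof (rule less.hyps)
      show "card ?S' < card S" using x less.prems(1) by (intro psubset_card_mono) auto
      show "finite ?S'" using less.prems(1) by simp
      show "\<forall>y\<in>?S'. g y \<in> ?S' \<and> g (g y) = y \<and> g y \<noteq> y \<and> f (g y) = f y"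
      proof
        fix y assume y: "y \<in> ?S'"
        then have yS: "y \<in> S" and yx: "y \<noteq> x" "y \<noteq> g x" by blast+
        have h: "g y \<in> S" "g (g y) = y" "g y \<noteq> y" "f (g y) = f y" using P[OF yS] by blast+
        have n1: "g y \<noteq> x"
        proof
          assume "g y = x"
          then have "g (g y) = g x" by simp
          then show False using h(2) yx(2) by simp
        qed
        have n2: "g y \<noteq> g x"
        proof
          assume "g y = g x"
          then have "g (g y) = g (g x)" by simp
          then show False using h(2) hx(2) yx(1) by simp
        qed
        show "g y \<in> ?S' \<and> g (g y) = y \<and> g y \<noteq> y \<and> f (g y) = f y" using h n1 n2 by blast
      qed
    qed
    finally show ?thesis by simp
  qed
qed

lemma DD_identical_rows:
  assumes fin: "finite U" and ab: "a \<in> U" "b \<in> U" "a \<noteq> b" and eq: "M a = M b"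
  shows "DD M U = 0"
  unfolding DD_def
proof (rule sum_invol_bit[where g = "\<lambda>\<sigma>. \<sigma> \<circ> Transposition.transpose a b"])
  show "finite {\<sigma>. \<sigma> permutes U}" using fin by (simp add: finite_permutations)
  let ?t = "Transposition.transpose a b"
  show "\<forall>\<sigma>\<in>{\<sigma>. \<sigma> permutes U}. \<sigma> \<circ> ?t \<in> {\<sigma>. \<sigma> permutes U} \<and> \<sigma> \<circ> ?t \<circ> ?t = \<sigma> \<and>
      \<sigma> \<circ> ?t \<noteq> \<sigma> \<and> (\<Prod>v\<in>U. M v ((\<sigma> \<circ> ?t) v)) = (\<Prod>v\<in>U. M v (\<sigma> v))"
  proof
    fix \<sigma> assume s: "\<sigma> \<in> {\<sigma>. \<sigma> permutes U}"
    then have sp: "\<sigma> permutes U" by simp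
    have p1: "\<sigma> \<circ> ?t \<in> {\<sigma>. \<sigma> permutes U}"
      using permutes_compose[OF permutes_swap_id[OF ab(1,2)] sp] by simp
    have p2: "\<sigma> \<circ> ?t \<circ> ?t = \<sigma>" by (simp add: comp_assoc)
    have p3: "\<sigma> \<circ> ?t \<noteq> \<sigma>"
    proof
      assume "\<sigma> \<circ> ?t = \<sigma>"
      then have "\<sigma> b = \<sigma> a" by (metis comp_apply transpose_apply_first)
      then show False using permutes_inj[OF sp] ab(3) by (metis injD)
    qed
    have "(\<Prod>v\<in>U. M v (\<sigma> v)) = (\<Prod>v\<in>?t ` U. M v (\<sigma> v))"
      using ab by simp
    also have "\<dots> = (\<Prod>v\<in>U. M (?t v) (\<sigma> (?t v)))"
      by (subst prod.reindex) auto
    also have "\<dots> = (\<Prod>v\<in>U. M v ((\<sigma> \<circ> ?t) v))"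
    proof (rule prod.cong[OF refl])
      fix v show "M (?t v) (\<sigma> (?t v)) = M v ((\<sigma> \<circ> ?t) v)"
        using eq by (cases "v = a"; cases "v = b") auto
    qed
    finally show "\<sigma> \<circ> ?t \<in> {\<sigma>. \<sigma> permutes U} \<and> \<sigma> \<circ> ?t \<circ> ?t = \<sigma> \<and>
      \<sigma> \<circ> ?t \<noteq> \<sigma> \<and> (\<Prod>v\<in>U. M v ((\<sigma> \<circ> ?t) v)) = (\<Prod>v\<in>U. M v (\<sigma> v))"
      using p1 p2 p3 by simp
  qed
qed

lemma DD_transpose:
  shows "DD (\<lambda>x y. M y x) U = DD M U"
  unfolding DD_def
proof -
  have "(\<Sum>\<sigma> | \<sigma> permutes U. \<Prod>v\<in>U. M (\<sigma> v) v)
      = (\<Sum>\<sigma> | \<sigma> permutes U. \<Prod>v\<in>U. M (inv \<sigma> v) v)"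
    by (rule sum_permutations_inverse)
  also have "\<dots> = (\<Sum>\<sigma> | \<sigma> permutes U. \<Prod>v\<in>U. M v (\<sigma> v))"
  proof (rule sum.cong[OF refl])
    fix \<sigma> assume "\<sigma> \<in> {\<sigma>. \<sigma> permutes U}"
    then have sp: "\<sigma> permutes U" by simp
    have "(\<Prod>v\<in>U. M (inv \<sigma> v) v) = (\<Prod>v\<in>U. M (inv \<sigma> (\<sigma> v)) (\<sigma> v))"
      using prod.permute[OF sp, of "\<lambda>v. M (inv \<sigma> v) v"] by (simp add: comp_def)
    also have "\<dots> = (\<Prod>v\<in>U. M v (\<sigma> v))"
      using permutes_inverses(2)[OF sp] by simp
    finally show "(\<Prod>v\<in>U. M (inv \<sigma> v) v) = (\<Prod>v\<in>U. M v (\<sigma> v))" .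
  qed
  finally show "(\<Sum>\<sigma> | \<sigma> permutes U. \<Prod>v\<in>U. M (\<sigma> v) v) = (\<Sum>\<sigma> | \<sigma> permutes U. \<Prod>v\<in>U. M v (\<sigma> v))" .
qed

lemma DD_row_add:
  assumes fin: "finite U" and a: "a \<in> U"
  shows "DD (M(a := (\<lambda>w. M a w + N w))) U = DD M U + DD (M(a := N)) U"
  unfolding DD_def sum.distrib[symmetric]
proof (rule sum.cong[OF refl])
  fix \<sigma> assume "\<sigma> \<in> {\<sigma>. \<sigma> permutes U}"
  have e: "(\<Prod>v\<in>U. (M(a := K)) v (\<sigma> v)) = K (\<sigma> a) * (\<Prod>v\<in>U - {a}. M v (\<sigma> v))" for K
  proof -
    have "(\<Prod>v\<in>U. (M(a := K)) v (\<sigma> v)) = (M(a := K)) a (\<sigma> a) * (\<Prod>v\<in>U - {a}. (M(a := K)) v (\<sigma> v))"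
      by (rule prod.remove[OF fin a])
    also have "(\<Prod>v\<in>U - {a}. (M(a := K)) v (\<sigma> v)) = (\<Prod>v\<in>U - {a}. M v (\<sigma> v))"
      by (rule prod.cong) auto
    finally show ?thesis by simp
  qed
  have e2: "(\<Prod>v\<in>U. M v (\<sigma> v)) = M a (\<sigma> a) * (\<Prod>v\<in>U - {a}. M v (\<sigma> v))"
    by (rule prod.remove[OF fin a])
  show "(\<Prod>v\<in>U. (M(a := \<lambda>w. M a w + N w)) v (\<sigma> v)) =
         (\<Prod>v\<in>U. M v (\<sigma> v)) + (\<Prod>v\<in>U. (M(a := N)) v (\<sigma> v))"
    unfolding e e2 by (rule distrib_right)
qed

lemma DD_congruence:
  assumes fin: "finite U" and ab: "a \<in> U" "b \<in> U" "a \<noteq> b"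
    and sym: "A a b = A b a" and z: "A a a = 0" "A b b = 0"
    and B: "\<And>v w. v \<in> U \<Longrightarrow> w \<in> U \<Longrightarrow> B v w =
      (if w = a then (if v = a then A a a + A b a else A v a) + (if v = a then A a b + A b b else A v b)
       else (if v = a then A a w + A b w else A v w))"
  shows "DD B U = DD A U"
proof -
  define R where "R = A(a := (\<lambda>w. A a w + A b w))"
  have R1: "DD R U = DD A U + DD (A(a := A b)) U"
    unfolding R_def by (rule DD_row_add[OF fin ab(1)])
  have R2: "DD (A(a := A b)) U = 0"
    by (rule DD_identical_rows[OF fin ab]) (use ab in auto)
  define RT where "RT = (\<lambda>x y. R y x)"
  define S where "S = RT(a := (\<lambda>w. RT a w + RT b w))"
  have S1: "DD S U = DD RT U + DD (RT(a := RT b)) U"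
    unfolding S_def by (rule DD_row_add[OF fin ab(1)])
  have S2: "DD (RT(a := RT b)) U = 0"
    by (rule DD_identical_rows[OF fin ab]) (use ab in auto)
  have T1: "DD RT U = DD R U" unfolding RT_def by (rule DD_transpose)
  have T2: "DD (\<lambda>x y. S y x) U = DD S U" by (rule DD_transpose)
  have "DD B U = DD (\<lambda>x y. S y x) U"
  proof (rule DD_cong)
    fix v w assume "v \<in> U" "w \<in> U"
    then show "B v w = S w v" using B ab(3)
      by (cases "v = a"; cases "w = a") (simp_all add: S_def RT_def R_def)
  qed
  then show ?thesis using R1 R2 S1 S2 T1 T2 by simp
qed

lemma det_agree:
  assumes "\<And>v w. v \<in> U \<Longrightarrow> w \<in> U \<Longrightarrow> E v w = E' v w"
  shows "det_F2 E U = det_F2 E' U"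
  unfolding det_F2_DD by (rule DD_cong) (use assms in auto)

lemma det_switch_nbhd:
  assumes G: "simple_graph V E" and U: "U \<subseteq> V" and ab: "a \<in> U" "b \<in> U" "a \<noteq> b"
  shows "det_F2 (switch_nbhd a b E) U = det_F2 E U"
proof -
  have fin: "finite U" using G U finite_subset unfolding simple_graph_def by blast
  have sy: "\<And>x y. x \<in> U \<Longrightarrow> y \<in> U \<Longrightarrow> E x y = E y x" and irr: "\<And>x. x \<in> U \<Longrightarrow> \<not> E x x"
    using G U unfolding simple_graph_def by blast+
  show ?thesis unfolding det_F2_DD
  proof (rule DD_congruence[OF fin ab])
    show "(if E a b then 1 else 0) = (if E b a then 1 else (0::bit))" using sy[OF ab(1,2)] by simp
    show "(if E a a then 1 else 0) = (0::bit)" "(if E b b then 1 else 0) = (0::bit)" using irr ab by auto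
    fix v w assume vw: "v \<in> U" "w \<in> U"
    have s1: "E b v = E v b" "E b w = E w b" using sy[of b v] sy[of b w] vw ab by auto
    show "(if switch_nbhd a b E v w then 1 else 0) =
      (if w = a then (if v = a then (if E a a then 1 else 0) + (if E b a then 1 else 0) else (if E v a then 1 else 0)) + (if v = a then (if E a b then 1 else 0) + (if E b b then 1 else 0) else (if E v b then 1 else (0::bit)))
       else (if v = a then (if E a w then 1 else 0) + (if E b w then 1 else 0) else (if E v w then 1 else 0)))"
    proof (cases "v = a")
      case True
      then show ?thesis
      proof (cases "w = a")
        case True
        then show ?thesis using \<open>v = a\<close> irr ab sy[OF ab(1,2)] by (simp add: switch_nbhd_def)
      next
        case False
        then show ?thesis using \<open>v = a\<close> by (simp add: switch_nbhd_def)
      qed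
    next
      case False
      then show ?thesis
      proof (cases "w = a")
        case True
        then show ?thesis using \<open>v \<noteq> a\<close> s1 by (simp add: switch_nbhd_def)
      next
        case False
        then show ?thesis using \<open>v \<noteq> a\<close> by (simp add: switch_nbhd_def)
      qed
    qed
  qed
qed

lemma simple_switch_edge:
  assumes "simple_graph V E" "a \<noteq> b"
  shows "simple_graph V (switch_edge a b E)"
  using assms unfolding simple_graph_def switch_edge_def by auto

lemma switch_commute:
  assumes "simple_graph V E" "a \<in> V" "b \<in> V" "a \<noteq> b" "v \<in> V" "w \<in> V"
  shows "switch_nbhd a b (switch_edge a b E) v w = switch_edge a b (switch_nbhd a b E) v w"
  using assms unfolding simple_graph_def switch_edge_def switch_nbhd_def by auto

theorem mainTheorem3:
  fixes V :: "'a set" and E :: "'a \<Rightarrow> 'a \<Rightarrow> bool" and a b :: 'a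
  assumes "simple_graph V E" and "a \<in> V" and "b \<in> V" and "a \<noteq> b"
  shows "skew_char_poly V E - skew_char_poly V (switch_edge a b E)
       = skew_char_poly V (switch_nbhd a b E) - skew_char_poly V (switch_edge a b (switch_nbhd a b E))"
proof -
  let ?E1 = "switch_edge a b E" and ?E2 = "switch_nbhd a b E" and ?E3 = "switch_edge a b (switch_nbhd a b E)"
  let ?t = "\<lambda>F U. monom (int (nondeg F U)) (card V - card U)"
  have G1: "simple_graph V ?E1" by (rule simple_switch_edge[OF assms(1,4)])
  have key: "?t E U - ?t ?E1 U = ?t ?E2 U - ?t ?E3 U" if U: "U \<subseteq> V" for U
  proof (cases "a \<in> U \<and> b \<in> U")
    case True
    have "det_F2 ?E2 U = det_F2 E U"
      using det_switch_nbhd[OF assms(1) U] True assms(4) by blast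
    moreover have "det_F2 ?E3 U = det_F2 ?E1 U"
    proof -
      have "det_F2 ?E3 U = det_F2 (switch_nbhd a b ?E1) U"
        by (rule det_agree) (use switch_commute[OF assms] U in auto)
      also have "\<dots> = det_F2 ?E1 U"
        using det_switch_nbhd[OF G1 U] True assms(4) by blast
      finally show ?thesis .
    qed
    ultimately show ?thesis unfolding nondeg_def by simp
  next
    case False
    have "det_F2 ?E1 U = det_F2 E U"
      by (rule det_agree) (use False in \<open>auto simp: switch_edge_def\<close>)
    moreover have "det_F2 ?E3 U = det_F2 ?E2 U"
      by (rule det_agree) (use False in \<open>auto simp: switch_edge_def\<close>)
    ultimately show ?thesis unfolding nondeg_def by simp
  qed
  show ?thesis
    unfolding skew_char_poly_def sum_subtractf[symmetric]
    by (rule sum.cong[OF refl]) (use key in auto)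
qed

end
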